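(* Let $(\Omega,T)$ be a strictly ergodic subshift over a finite alphabet $A\subset\mathbb{R}$ and $E\in\mathbb{R}$. Then $M^E$ is uniform if and only if the limit $\lim_{|x|\to\infty}\frac{F^E(x)}{|x|}$ (over $x\in\mathcal{W}$) exists.
   Context: Let $A\subset\mathbb{R}$ be finite with the discrete topology, $A^{\mathbb{Z}}$ with the product topology, and $T$ the shift $(Ta)(n)=a(n+1)$. A subshift is a closed $T$-invariant set $\Omega\subset A^{\mathbb{Z}}$; strictly ergodic means every orbit is dense and there is exactly one $T$-invariant Borel probability measure. $\mathcal{W}$ is the set of finite subwords of elements of $\Omega$ and $|x|$ the length of $x$. For $E\in\mathbb{R}$, $M^E(\omega)=\begin{pmatrix}E-\omega(1)&-1\\1&0\end{pmatrix}$, $M^E(n,\omega)=M^E(T^{n-1}\omega)\cdots M^E(\omega)$ for $n>0$, $\mathrm{Id}$ for $n=0$, $M^E(T^n\omega)^{-1}\cdots M^E(T^{-1}\omega)^{-1}$ for $n<0$. With $\|\cdot\|$ the operator norm, $M^E$ is uniform if $\lim_{|n|\to\infty}\frac1{|n|}\log\|M^E(n,\omega)\|$ exists for every $\omega\in\Omega$ and the convergence is uniform on $\Omega$. Define $F^E:\mathcal{W}\to\mathbb{R}$ by $F^E(x)=\log\|M^E(|x|,\omega)\|$, where $\omega\in\Omega$ is any element with $\omega(1)\cdots\omega(|x|)=x$ (this is independent of the choice of $\omega$). *)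

theory Defs
  imports "HOL-Probability.Probability"
begin

definition shift :: "(int \<Rightarrow> real) \<Rightarrow> (int \<Rightarrow> real)" where
  "shift a = (\<lambda>n. a (n + 1))"

definition shiftn :: "int \<Rightarrow> (int \<Rightarrow> real) \<Rightarrow> (int \<Rightarrow> real)" where
  "shiftn k a = (\<lambda>n. a (n + k))"

text \<open>Subshift over the finite alphabet A (product topology on functions int => real;
  since A is finite, this restricts to the product of discrete topologies on A^Z).\<close>

definition subshift :: "real set \<Rightarrow> (int \<Rightarrow> real) set \<Rightarrow> bool" where
  "subshift A \<Omega> \<longleftrightarrow> finite A \<and> \<Omega> \<subseteq> {a. \<forall>n. a n \<in> A} \<and> closed \<Omega> \<and> shift ` \<Omega> = \<Omega>"

definition minimal_shift :: "(int \<Rightarrow> real) set \<Rightarrow> bool" where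
  "minimal_shift \<Omega> \<longleftrightarrow> (\<forall>\<omega>\<in>\<Omega>. \<Omega> \<subseteq> closure {shiftn k \<omega> | k. True})"

definition invariant_prob :: "(int \<Rightarrow> real) set \<Rightarrow> (int \<Rightarrow> real) measure \<Rightarrow> bool" where
  "invariant_prob \<Omega> \<mu> \<longleftrightarrow>
     sets \<mu> = sets (restrict_space borel \<Omega>) \<and> prob_space \<mu> \<and>
     (\<forall>B\<in>sets \<mu>. emeasure \<mu> (shift -` B \<inter> \<Omega>) = emeasure \<mu> B)"

definition uniquely_ergodic :: "(int \<Rightarrow> real) set \<Rightarrow> bool" where
  "uniquely_ergodic \<Omega> \<longleftrightarrow> (\<exists>!\<mu>. invariant_prob \<Omega> \<mu>)"

definition strictly_ergodic :: "(int \<Rightarrow> real) set \<Rightarrow> bool" where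
  "strictly_ergodic \<Omega> \<longleftrightarrow> minimal_shift \<Omega> \<and> uniquely_ergodic \<Omega>"

definition transfer :: "real \<Rightarrow> (int \<Rightarrow> real) \<Rightarrow> real^2^2" where
  "transfer E \<omega> = vector [vector [E - \<omega> 1, -1], vector [1, 0]]"

fun cocycle_pos :: "real \<Rightarrow> (int \<Rightarrow> real) \<Rightarrow> nat \<Rightarrow> real^2^2" where
  "cocycle_pos E \<omega> 0 = mat 1"
| "cocycle_pos E \<omega> (Suc n) = transfer E (shiftn (int n) \<omega>) ** cocycle_pos E \<omega> n"

fun cocycle_neg :: "real \<Rightarrow> (int \<Rightarrow> real) \<Rightarrow> nat \<Rightarrow> real^2^2" where
  "cocycle_neg E \<omega> 0 = mat 1"
| "cocycle_neg E \<omega> (Suc m) = matrix_inv (transfer E (shiftn (- int (Suc m)) \<omega>)) ** cocycle_neg E \<omega> m"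

definition cocycle :: "real \<Rightarrow> int \<Rightarrow> (int \<Rightarrow> real) \<Rightarrow> real^2^2" where
  "cocycle E n \<omega> = (if n \<ge> 0 then cocycle_pos E \<omega> (nat n) else cocycle_neg E \<omega> (nat (- n)))"

definition opnorm :: "real^2^2 \<Rightarrow> real" where
  "opnorm M = onorm (\<lambda>x. M *v x)"

definition uniform_cocycle :: "(int \<Rightarrow> real) set \<Rightarrow> real \<Rightarrow> bool" where
  "uniform_cocycle \<Omega> E \<longleftrightarrow>
     (\<exists>L. \<forall>\<epsilon>>0. \<exists>N::nat. \<forall>\<omega>\<in>\<Omega>. \<forall>n::int. \<bar>n\<bar> \<ge> int N \<longrightarrow>
        \<bar>ln (opnorm (cocycle E n \<omega>)) / real_of_int \<bar>n\<bar> - L \<omega>\<bar> < \<epsilon>)"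

definition words :: "(int \<Rightarrow> real) set \<Rightarrow> real list set" where
  "words \<Omega> = {x. \<exists>\<omega>\<in>\<Omega>. \<exists>i::int. x = map (\<lambda>k. \<omega> (i + int k)) [1..<Suc (length x)]}"

definition has_prefix :: "(int \<Rightarrow> real) \<Rightarrow> real list \<Rightarrow> bool" where
  "has_prefix \<omega> x \<longleftrightarrow> (\<forall>k\<in>{1..length x}. \<omega> (int k) = x ! (k - 1))"

definition F :: "(int \<Rightarrow> real) set \<Rightarrow> real \<Rightarrow> real list \<Rightarrow> real" where
  "F \<Omega> E x = ln (opnorm (cocycle E (int (length x)) (SOME \<omega>. \<omega> \<in> \<Omega> \<and> has_prefix \<omega> x)))"

definition word_limit_exists :: "(int \<Rightarrow> real) set \<Rightarrow> real \<Rightarrow> bool" where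
  "word_limit_exists \<Omega> E \<longleftrightarrow>
     (\<exists>c. \<forall>\<epsilon>>0. \<exists>N::nat. \<forall>x\<in>words \<Omega>. length x \<ge> N \<longrightarrow>
        \<bar>F \<Omega> E x / real (length x) - c\<bar> < \<epsilon>)"

end

theory Submission
  imports Defs
begin

definition d2 :: "real^2^2 \<Rightarrow> real" where
  "d2 M = M$1$1 * M$2$2 - M$1$2 * M$2$1"

definition adj2 :: "real^2^2 \<Rightarrow> real^2^2" where
  "adj2 M = vector [vector [M$2$2, - M$1$2], vector [- M$2$1, M$1$1]]"

lemma mm_entry: "((A::real^2^2) ** B)$i$j = A$i$1 * B$1$j + A$i$2 * B$2$j"
  by (simp add: matrix_matrix_mult_def sum_2)

lemma mat1_entry: "(mat 1 :: real^2^2)$i$j = (if i = j then 1 else 0)"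
  by (simp add: mat_def)

lemma mat_eq2: "(M::real^2^2) = N \<longleftrightarrow> M$1$1 = N$1$1 \<and> M$1$2 = N$1$2 \<and> M$2$1 = N$2$1 \<and> M$2$2 = N$2$2"
  by (auto simp: vec_eq_iff forall_2)

lemma d2_mult: "d2 (A ** B) = d2 A * d2 B"
  unfolding d2_def mm_entry by algebra

lemma adj2_left: "d2 M = 1 \<Longrightarrow> adj2 M ** M = mat 1"
  unfolding mat_eq2 mm_entry mat1_entry adj2_def d2_def by (simp; algebra)

lemma adj2_right: "d2 M = 1 \<Longrightarrow> M ** adj2 M = mat 1"
  unfolding mat_eq2 mm_entry mat1_entry adj2_def d2_def by (simp; algebra)

lemma d2_adj2: "d2 (adj2 M) = d2 M"
  unfolding adj2_def d2_def by (simp; algebra)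

lemma inv_eq: assumes "(M::real^2^2) ** B = mat 1" "B ** M = mat 1" shows "matrix_inv M = B"
proof -
  have ex: "\<exists>A'. M ** A' = mat 1 \<and> A' ** M = mat 1" using assms by blast
  define A' where "A' = matrix_inv M"
  have h: "M ** A' = mat 1 \<and> A' ** M = mat 1"
    unfolding A'_def matrix_inv_def using someI_ex[OF ex] .
  have "A' = A' ** (M ** B)" using assms by (simp add: matrix_mul_rid)
  also have "\<dots> = (A' ** M) ** B" by (simp add: matrix_mul_assoc)
  also have "\<dots> = B" using h by (simp add: matrix_mul_lid)
  finally show ?thesis unfolding A'_def .
qed

lemma transfer_entries:
  "transfer E w $1$1 = E - w 1" "transfer E w $1$2 = -1" "transfer E w $2$1 = 1" "transfer E w $2$2 = 0"
  by (simp_all add: transfer_def)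

lemma d2_transfer: "d2 (transfer E w) = 1"
  by (simp add: d2_def transfer_entries)

lemma opn_entry: "\<bar>M$i$j\<bar> \<le> opnorm M"
  unfolding opnorm_def using matrix_component_le_onorm[of M i j] by simp

lemma opn_sum: "opnorm M \<le> \<bar>M$1$1\<bar> + \<bar>M$1$2\<bar> + \<bar>M$2$1\<bar> + \<bar>M$2$2\<bar>"
  unfolding opnorm_def using onorm_le_matrix_component_sum[of M] by (simp add: sum_2)

lemma opn_adj1: "opnorm (adj2 M) \<le> 4 * opnorm M"
proof -
  have "opnorm (adj2 M) \<le> \<bar>M$1$1\<bar> + \<bar>M$1$2\<bar> + \<bar>M$2$1\<bar> + \<bar>M$2$2\<bar>"
    using opn_sum[of "adj2 M"] by (simp add: adj2_def)
  then show ?thesis using opn_entry[of M 1 1] opn_entry[of M 1 2] opn_entry[of M 2 1] opn_entry[of M 2 2]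
    by linarith
qed

lemma opn_adj2: "opnorm M \<le> 4 * opnorm (adj2 M)"
proof -
  have "opnorm M \<le> \<bar>M$1$1\<bar> + \<bar>M$1$2\<bar> + \<bar>M$2$1\<bar> + \<bar>M$2$2\<bar>"
    using opn_sum[of "M"] by simp
  then show ?thesis using opn_entry[of "adj2 M" 1 1] opn_entry[of "adj2 M" 1 2]
     opn_entry[of "adj2 M" 2 1] opn_entry[of "adj2 M" 2 2]
    by (simp add: adj2_def)
qed

lemma opn_pos: assumes "d2 M = 1" shows "opnorm M > 0"
proof (rule ccontr)
  assume "\<not> opnorm M > 0"
  then have "M$i$j = 0" for i j using opn_entry[of M i j] by linarith
  then show False using assms by (simp add: d2_def)
qed

lemma opn_mult: "opnorm (A ** B) \<le> opnorm A * opnorm B"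
proof -
  have "(\<lambda>x. (A ** B) *v x) = (\<lambda>x. A *v x) \<circ> (\<lambda>x. B *v x)"
    by (simp add: o_def matrix_vector_mul_assoc)
  then show ?thesis unfolding opnorm_def
    using onorm_compose[OF matrix_vector_mul_bounded_linear matrix_vector_mul_bounded_linear]
    by simp
qed

lemma opn_tri: "opnorm A \<le> opnorm (A - B) + opnorm B"
proof -
  have "(\<lambda>x. A *v x) = (\<lambda>x. (A - B) *v x + B *v x)"
    by (simp add: matrix_vector_mult_diff_rdistrib)
  then show ?thesis unfolding opnorm_def
    using onorm_triangle[OF matrix_vector_mul_bounded_linear matrix_vector_mul_bounded_linear, of "A - B" B]
    by simp
qed

lemma entry_le_norm: "\<bar>(C::real^2^2)$i$j\<bar> \<le> norm C"
proof -
  have "norm (C$i) \<le> norm C" by (rule Finite_Cartesian_Product.norm_nth_le)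
  moreover have "\<bar>(C$i)$j\<bar> \<le> norm (C$i)" by (rule component_le_norm_cart)
  ultimately show ?thesis by linarith
qed

lemma opn_lip: "dist (opnorm A) (opnorm B) \<le> 4 * dist A B"
proof -
  have a: "opnorm C \<le> 4 * norm C" for C
    using opn_sum[of C] entry_le_norm[of C 1 1] entry_le_norm[of C 1 2]
      entry_le_norm[of C 2 1] entry_le_norm[of C 2 2] by linarith
  have e: "(\<lambda>x. (A - B) *v x) = (\<lambda>x. - ((B - A) *v x))"
    by (simp add: matrix_vector_mult_diff_rdistrib)
  have "opnorm (A - B) = opnorm (B - A)"
    unfolding opnorm_def e by (rule onorm_neg)
  then show ?thesis using opn_tri[of A B] opn_tri[of B A] a[of "A - B"]
    by (simp add: dist_real_def dist_norm abs_le_iff)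
qed

lemma opn_cont: "continuous_on UNIV opnorm"
  by (rule lipschitz_on_continuous_on[of 4]) (auto intro!: lipschitz_onI opn_lip)

lemma shiftn_shiftn: "shiftn a (shiftn b w) = shiftn (a + b) w"
  by (simp add: shiftn_def ac_simps)

lemma shiftn_0[simp]: "shiftn 0 w = w" by (simp add: shiftn_def)

lemma shift_shiftn: "shift w = shiftn 1 w" by (simp add: shift_def shiftn_def)

lemma cp_Suc: "cocycle_pos E w (Suc n) = cocycle_pos E (shift w) n ** transfer E w"
proof (induction n arbitrary: w)
  case 0
  then show ?case by (simp add: matrix_mul_lid matrix_mul_rid)
next
  case (Suc n)
  have "cocycle_pos E w (Suc (Suc n)) = transfer E (shiftn (int (Suc n)) w) ** cocycle_pos E w (Suc n)"
    by simp
  also have "\<dots> = transfer E (shiftn (int (Suc n)) w) ** (cocycle_pos E (shift w) n ** transfer E w)"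
    using Suc by simp
  also have "\<dots> = cocycle_pos E (shift w) (Suc n) ** transfer E w"
    by (simp add: matrix_mul_assoc shift_shiftn shiftn_shiftn add.commute)
  finally show ?case .
qed

lemma cp_local: "(\<And>k. 1 \<le> k \<Longrightarrow> k \<le> int n \<Longrightarrow> w k = w' k) \<Longrightarrow> cocycle_pos E w n = cocycle_pos E w' n"
proof (induction n)
  case 0
  then show ?case by simp
next
  case (Suc n)
  have "transfer E (shiftn (int n) w) = transfer E (shiftn (int n) w')"
    using Suc.prems[of "1 + int n"] by (simp add: transfer_def shiftn_def add.commute)
  then show ?case using Suc by simp
qed

lemma d2_cp: "d2 (cocycle_pos E w n) = 1"
proof (induction n)
  case 0 then show ?case by (simp add: d2_def mat1_entry)
next
  case (Suc n) then show ?case by (simp only: cocycle_pos.simps d2_mult d2_transfer) 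
qed

lemma inv_transfer: "matrix_inv (transfer E w) = adj2 (transfer E w)"
  by (rule inv_eq) (simp_all add: adj2_left adj2_right d2_transfer)

lemma cn_cp: "cocycle_neg E w m ** cocycle_pos E (shiftn (- int m) w) m = mat 1"
proof (induction m arbitrary: w)
  case 0
  then show ?case by (simp add: matrix_mul_lid)
next
  case (Suc m)
  define v where "v = shiftn (- int (Suc m)) w"
  have sv: "shift v = shiftn (- int m) w" by (simp add: v_def shift_shiftn shiftn_shiftn)
  have "cocycle_neg E w (Suc m) ** cocycle_pos E v (Suc m)
     = matrix_inv (transfer E v) ** (cocycle_neg E w m ** cocycle_pos E (shift v) m) ** transfer E v"
  proof -
    have a: "cocycle_pos E v (Suc m) = cocycle_pos E (shift v) m ** transfer E v" by (rule cp_Suc)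
    have b: "cocycle_neg E w (Suc m) = matrix_inv (transfer E v) ** cocycle_neg E w m"
      by (simp add: v_def)
    show ?thesis unfolding a b by (simp only: matrix_mul_assoc)
  qed
  also have "\<dots> = mat 1" using Suc[of w] sv
    by (simp add: matrix_mul_rid inv_transfer adj2_left d2_transfer)
  finally show ?case by (simp add: v_def)
qed

lemma cn_adj: "cocycle_neg E w m = adj2 (cocycle_pos E (shiftn (- int m) w) m)"
proof -
  let ?P = "cocycle_pos E (shiftn (- int m) w) m"
  have "cocycle_neg E w m = cocycle_neg E w m ** (?P ** adj2 ?P)"
    by (simp add: adj2_right d2_cp matrix_mul_rid)
  also have "\<dots> = adj2 ?P" by (simp add: matrix_mul_assoc cn_cp matrix_mul_lid)
  finally show ?thesis .
qed

lemma ln_adj: assumes "d2 M = 1" shows "\<bar>ln (opnorm (adj2 M)) - ln (opnorm M)\<bar> \<le> ln 4"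
proof -
  have p1: "opnorm M > 0" using opn_pos assms by blast
  have p2: "opnorm (adj2 M) > 0" using opn_pos assms d2_adj2 by metis
  have "ln (opnorm (adj2 M)) \<le> ln (4 * opnorm M)" using p1 p2 opn_adj1 by (subst ln_le_cancel_iff) auto
  moreover have "ln (opnorm M) \<le> ln (4 * opnorm (adj2 M))" using p1 p2 opn_adj2 by (subst ln_le_cancel_iff) auto
  ultimately show ?thesis using p1 p2 by (simp add: ln_mult)
qed

lemma cp_cont: "continuous_on UNIV (\<lambda>w. cocycle_pos E w n)"
proof (induction n)
  case 0
  then show ?case by simp
next
  case (Suc n)
  have t: "continuous_on UNIV (\<lambda>w. transfer E (shiftn (int n) w) $ i $ j)" for i j
  proof -
    have "continuous_on UNIV (\<lambda>w::int\<Rightarrow>real. E - w (1 + int n))"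
      by (intro continuous_intros continuous_on_product_coordinates)
    then show ?thesis
      using exhaust_2[of i] exhaust_2[of j]
      by (auto simp: transfer_entries shiftn_def add.commute)
  qed
  have c: "continuous_on UNIV (\<lambda>w. cocycle_pos E w n $ i $ j)" for i j
    using Suc by (intro continuous_intros)
  have e: "(\<lambda>w. cocycle_pos E w (Suc n)) = (\<lambda>w. \<chi> i j. transfer E (shiftn (int n) w) $ i $ 1 * cocycle_pos E w n $ 1 $ j
     + transfer E (shiftn (int n) w) $ i $ 2 * cocycle_pos E w n $ 2 $ j)"
    by (rule ext) (simp only: cocycle_pos.simps; simp add: vec_eq_iff mm_entry)
  show ?case unfolding e using t c by (intro continuous_on_vec_lambda continuous_on_add continuous_on_mult) auto
qed

lemma g_cont: "continuous_on UNIV (\<lambda>w. ln (opnorm (cocycle_pos E w n)))"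
proof -
  have "continuous_on UNIV (opnorm \<circ> (\<lambda>w. cocycle_pos E w n))"
    using continuous_on_compose[OF cp_cont continuous_on_subset[OF opn_cont]] by blast
  then have c: "continuous_on UNIV (\<lambda>w. opnorm (cocycle_pos E w n))" by (simp add: o_def)
  have nz: "\<forall>w\<in>UNIV. opnorm (cocycle_pos E w n) \<noteq> 0"
    using opn_pos[OF d2_cp] by (metis less_irrefl)
  show ?thesis by (rule continuous_on_ln[OF c nz])
qed

lemma sub_shift: "subshift A \<Omega> \<Longrightarrow> w \<in> \<Omega> \<Longrightarrow> shift w \<in> \<Omega>"
  unfolding subshift_def by blast

lemma sub_unshift: assumes "subshift A \<Omega>" "w \<in> \<Omega>" shows "shiftn (-1) w \<in> \<Omega>"
proof -
  have "w \<in> shift ` \<Omega>" using assms unfolding subshift_def by blast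
  then obtain w' where w': "w' \<in> \<Omega>" "w = shift w'" by blast
  have "shiftn (-1) w = w'" using w'(2) by (simp add: shift_def shiftn_def)
  then show ?thesis using w' by simp
qed

lemma sub_shiftn: assumes "subshift A \<Omega>" "w \<in> \<Omega>" shows "shiftn k w \<in> \<Omega>"
proof (induction k rule: int_induct[where k=0])
  case base then show ?case using assms by simp
next
  case (step1 i)
  have "shiftn (i + 1) w = shift (shiftn i w)" by (simp add: shift_shiftn shiftn_shiftn add.commute)
  then show ?case using sub_shift[OF assms(1) step1(2)] by simp
next
  case (step2 i)
  have "shiftn (i - 1) w = shiftn (-1) (shiftn i w)" by (simp add: shiftn_shiftn)
  then show ?case using sub_unshift[OF assms(1) step2(2)] by simp
qed

lemma nth_map_upt1: "1 \<le> k \<Longrightarrow> k \<le> n \<Longrightarrow> map f [1..<Suc n] ! (k - 1) = f k"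
  by (simp del: upt_Suc)

lemma word_of: assumes "w \<in> \<Omega>" shows "map (\<lambda>k. w (i + int k)) [1..<Suc n] \<in> words \<Omega>"
  unfolding words_def using assms by auto

lemma F_eq: assumes "w \<in> \<Omega>"
  shows "F \<Omega> E (map (\<lambda>k. w (0 + int k)) [1..<Suc n]) = ln (opnorm (cocycle_pos E w n))"
proof -
  let ?x = "map (\<lambda>k. w (0 + int k)) [1..<Suc n]"
  have hp: "has_prefix w ?x" unfolding has_prefix_def
  proof
    fix k assume k: "k \<in> {1..length ?x}"
    have "?x ! (k - 1) = w (0 + int k)" by (rule nth_map_upt1) (use k in \<open>auto simp del: upt_Suc\<close>)
    then show "w (int k) = ?x ! (k - 1)" by simp
  qed
  have ex: "\<exists>v. v \<in> \<Omega> \<and> has_prefix v ?x" using hp assms by blast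
  define v where "v = (SOME v. v \<in> \<Omega> \<and> has_prefix v ?x)"
  have v: "v \<in> \<Omega> \<and> has_prefix v ?x" unfolding v_def by (rule someI_ex[OF ex])
  have "cocycle_pos E v n = cocycle_pos E w n"
  proof (rule cp_local)
    fix k :: int assume k: "1 \<le> k" "k \<le> int n"
    have j: "nat k \<in> {1..length ?x}" using k by auto
    have "v (int (nat k)) = ?x ! (nat k - 1)" using v j unfolding has_prefix_def by blast
    also have "\<dots> = w (0 + int (nat k))" by (rule nth_map_upt1) (use k in auto)
    finally show "v k = w k" using k by simp
  qed
  then show ?thesis unfolding F_def v_def[symmetric] by (simp del: upt_Suc add: cocycle_def)
qed

lemma F_word: assumes "subshift A \<Omega>" "x \<in> words \<Omega>"
  shows "\<exists>v\<in>\<Omega>. F \<Omega> E x = ln (opnorm (cocycle_pos E v (length x)))"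
proof -
  obtain w i where w: "w \<in> \<Omega>" "x = map (\<lambda>k. w (i + int k)) [1..<Suc (length x)]"
    using assms(2) unfolding words_def by blast
  have "has_prefix (shiftn i w) x" unfolding has_prefix_def
  proof
    fix k assume k: "k \<in> {1..length x}"
    have "x ! (k - 1) = w (i + int k)"
      using k by (subst w(2)) (rule nth_map_upt1, auto)
    then show "shiftn i w (int k) = x ! (k - 1)" by (simp add: shiftn_def add.commute)
  qed
  then have ex: "\<exists>v. v \<in> \<Omega> \<and> has_prefix v x" using sub_shiftn[OF assms(1) w(1)] by blast
  define v where "v = (SOME v. v \<in> \<Omega> \<and> has_prefix v x)"
  have v: "v \<in> \<Omega> \<and> has_prefix v x" unfolding v_def by (rule someI_ex[OF ex])
  then show ?thesis unfolding F_def v_def[symmetric] by (auto simp: cocycle_def)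
qed

lemma dir_back: assumes sub: "subshift A \<Omega>" and wl: "word_limit_exists \<Omega> E"
  shows "uniform_cocycle \<Omega> E"
proof -
  obtain c where c: "\<And>\<epsilon>. \<epsilon> > 0 \<Longrightarrow> \<exists>N::nat. \<forall>x\<in>words \<Omega>. length x \<ge> N \<longrightarrow>
        \<bar>F \<Omega> E x / real (length x) - c\<bar> < \<epsilon>"
    using wl unfolding word_limit_exists_def by blast
  have "\<forall>\<epsilon>>0. \<exists>N::nat. \<forall>\<omega>\<in>\<Omega>. \<forall>n::int. \<bar>n\<bar> \<ge> int N \<longrightarrow>
        \<bar>ln (opnorm (cocycle E n \<omega>)) / real_of_int \<bar>n\<bar> - c\<bar> < \<epsilon>"
  proof (intro allI impI)
    fix \<epsilon> :: real assume ep: "\<epsilon> > 0"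
    obtain N where N: "\<forall>x\<in>words \<Omega>. length x \<ge> N \<longrightarrow> \<bar>F \<Omega> E x / real (length x) - c\<bar> < \<epsilon>/2"
      using c[of "\<epsilon>/2"] ep by auto
    define N2 where "N2 = nat (ceiling (2 * ln 4 / \<epsilon>)) + 1"
    have N2: "ln 4 / real N2 < \<epsilon> / 2"
    proof -
      have "2 * ln 4 / \<epsilon> < real N2" unfolding N2_def by linarith
      then have "2 * ln 4 < real N2 * \<epsilon>" using ep by (simp add: field_simps)
      moreover have p: "real N2 > 0" unfolding N2_def by simp
      ultimately show ?thesis by (subst pos_divide_less_eq[OF p]) (simp add: algebra_simps)
    qed
    have pos: "\<bar>ln (opnorm (cocycle_pos E w m)) / real m - c\<bar> < \<epsilon>/2" if "w \<in> \<Omega>" "m \<ge> N" for w m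
    proof -
      have "map (\<lambda>k. w (0 + int k)) [1..<Suc m] \<in> words \<Omega>" by (rule word_of[OF that(1)])
      moreover have "length (map (\<lambda>k. w (0 + int k)) [1..<Suc m]) = m" by simp
      ultimately show ?thesis using N that F_eq[OF that(1), of E m] by metis
    qed
    show "\<exists>N::nat. \<forall>\<omega>\<in>\<Omega>. \<forall>n::int. \<bar>n\<bar> \<ge> int N \<longrightarrow>
        \<bar>ln (opnorm (cocycle E n \<omega>)) / real_of_int \<bar>n\<bar> - c\<bar> < \<epsilon>"
    proof (intro exI[of _ "max N N2"] ballI allI impI)
      fix w n assume w: "w \<in> \<Omega>" and n: "int (max N N2) \<le> \<bar>n::int\<bar>"
      show "\<bar>ln (opnorm (cocycle E n w)) / real_of_int \<bar>n\<bar> - c\<bar> < \<epsilon>"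
      proof (cases "n \<ge> 0")
        case True
        define m where "m = nat n"
        have "m \<ge> N" using n True unfolding m_def by auto
        then have "\<bar>ln (opnorm (cocycle_pos E w m)) / real m - c\<bar> < \<epsilon>/2" using pos w by blast
        moreover have "cocycle E n w = cocycle_pos E w m" "real_of_int \<bar>n\<bar> = real m"
          using True unfolding m_def cocycle_def by auto
        ultimately show ?thesis using ep by simp
      next
        case False
        define m where "m = nat (- n)"
        define v where "v = shiftn (- int m) w"
        have v: "v \<in> \<Omega>" unfolding v_def by (rule sub_shiftn[OF sub w])
        have mN: "m \<ge> N" "m \<ge> N2" using n False unfolding m_def by auto
        have N2pos: "N2 > 0" unfolding N2_def by simp
        have a: "\<bar>ln (opnorm (cocycle_pos E v m)) / real m - c\<bar> < \<epsilon>/2" using pos v mN by blast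
        have eq: "cocycle E n w = adj2 (cocycle_pos E v m)" "real_of_int \<bar>n\<bar> = real m"
          using False unfolding m_def cocycle_def v_def cn_adj by auto
        have b: "\<bar>ln (opnorm (adj2 (cocycle_pos E v m))) - ln (opnorm (cocycle_pos E v m))\<bar> \<le> ln 4"
          by (rule ln_adj[OF d2_cp])
        have mpos: "real m > 0" using mN N2pos by simp
        have "ln 4 / real m \<le> ln 4 / real N2"
          using mN N2pos by (intro divide_left_mono) auto
        then have l4: "ln 4 / real m < \<epsilon>/2" using N2 by linarith
        have "\<bar>ln (opnorm (adj2 (cocycle_pos E v m))) / real m - ln (opnorm (cocycle_pos E v m)) / real m\<bar>
              = \<bar>ln (opnorm (adj2 (cocycle_pos E v m))) - ln (opnorm (cocycle_pos E v m))\<bar> / real m"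
          using mpos by (simp add: diff_divide_distrib[symmetric])
        also have "\<dots> \<le> ln 4 / real m" using b mpos by (simp add: divide_right_mono)
        finally show ?thesis unfolding eq using a l4 by linarith
      qed
    qed
  qed
  then show ?thesis unfolding uniform_cocycle_def by (intro exI[of _ "\<lambda>_. c"]) simp
qed

lemma step_bound:
  "\<bar>ln (opnorm (cocycle_pos E w (Suc n))) - ln (opnorm (cocycle_pos E (shift w) n))\<bar>
     \<le> \<bar>ln (opnorm (transfer E w))\<bar> + \<bar>ln (opnorm (adj2 (transfer E w)))\<bar>"
proof -
  let ?Q = "cocycle_pos E (shift w) n" and ?T = "transfer E w"
  have e: "cocycle_pos E w (Suc n) = ?Q ** ?T" by (rule cp_Suc)
  have pQ: "opnorm ?Q > 0" by (rule opn_pos[OF d2_cp])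
  have pQT: "opnorm (?Q ** ?T) > 0" unfolding e[symmetric] by (rule opn_pos[OF d2_cp])
  have pa: "opnorm ?T > 0" by (rule opn_pos[OF d2_transfer])
  have pb: "opnorm (adj2 ?T) > 0" by (rule opn_pos) (simp add: d2_adj2 d2_transfer)
  have "?Q = (?Q ** ?T) ** adj2 ?T"
    by (simp add: matrix_mul_assoc[symmetric] adj2_right d2_transfer matrix_mul_rid)
  then have i2: "opnorm ?Q \<le> opnorm (?Q ** ?T) * opnorm (adj2 ?T)" by (metis opn_mult)
  have i1: "opnorm (?Q ** ?T) \<le> opnorm ?Q * opnorm ?T" by (rule opn_mult)
  have "ln (opnorm (?Q ** ?T)) \<le> ln (opnorm ?Q * opnorm ?T)"
    using i1 pQ pa pQT by (subst ln_le_cancel_iff) auto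
  then have l1: "ln (opnorm (?Q ** ?T)) \<le> ln (opnorm ?Q) + ln (opnorm ?T)"
    using pQ pa by (simp add: ln_mult)
  have "ln (opnorm ?Q) \<le> ln (opnorm (?Q ** ?T) * opnorm (adj2 ?T))"
    using i2 pQ pb pQT by (subst ln_le_cancel_iff) auto
  then have l2: "ln (opnorm ?Q) \<le> ln (opnorm (?Q ** ?T)) + ln (opnorm (adj2 ?T))"
    using pQT pb by (simp add: ln_mult)
  show ?thesis unfolding e using l1 l2 by linarith
qed

lemma L_shift:
  fixes u v :: "nat \<Rightarrow> real"
  assumes u: "(\<lambda>n. u n / real n) \<longlonglongrightarrow> a" and v: "(\<lambda>n. v n / real n) \<longlonglongrightarrow> b"
    and bd: "\<And>n. \<bar>u (Suc n) - v n\<bar> \<le> C"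
  shows "a = b"
proof -
  have h1: "(\<lambda>n. u (Suc n) / real (Suc n)) \<longlonglongrightarrow> a" using LIMSEQ_Suc[OF u] by simp
  have h2: "(\<lambda>n. (u (Suc n) - v n) / real (Suc n)) \<longlonglongrightarrow> 0"
  proof (rule Lim_null_comparison)
    show "\<forall>\<^sub>F n in sequentially. norm ((u (Suc n) - v n) / real (Suc n)) \<le> C / real (Suc n)"
      using bd by (auto simp: divide_right_mono abs_divide)
    show "(\<lambda>n. C / real (Suc n)) \<longlonglongrightarrow> 0" using LIMSEQ_Suc[OF lim_const_over_n[of C]] by simp
  qed
  have h3: "(\<lambda>n. v n / real n * (real n / real (Suc n))) \<longlonglongrightarrow> b * 1"
    by (intro tendsto_mult v LIMSEQ_n_over_Suc_n)
  have h4: "(\<lambda>n. (u (Suc n) - v n) / real (Suc n) + v n / real n * (real n / real (Suc n))) \<longlonglongrightarrow> 0 + b * 1"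
    by (intro tendsto_add h2 h3)
  have ev: "\<forall>\<^sub>F n in sequentially. (u (Suc n) - v n) / real (Suc n) + v n / real n * (real n / real (Suc n))
         = u (Suc n) / real (Suc n)"
    using eventually_ge_at_top[of "1::nat"]
  proof eventually_elim
    case (elim n)
    then have "v n / real n * (real n / real (Suc n)) = v n / real (Suc n)" by simp
    then show ?case by (simp add: diff_divide_distrib)
  qed
  have "(\<lambda>n. u (Suc n) / real (Suc n)) \<longlonglongrightarrow> b"
    using Lim_transform_eventually[OF h4 ev] by simp
  then show ?thesis using h1 LIMSEQ_unique by blast
qed

lemma dir_fwd: assumes sub: "subshift A \<Omega>" and se: "strictly_ergodic \<Omega>" and uc: "uniform_cocycle \<Omega> E"
  shows "word_limit_exists \<Omega> E"
proof -
  obtain L where L: "\<And>\<epsilon>. \<epsilon> > 0 \<Longrightarrow> \<exists>N::nat. \<forall>\<omega>\<in>\<Omega>. \<forall>n::int. \<bar>n\<bar> \<ge> int N \<longrightarrow>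
        \<bar>ln (opnorm (cocycle E n \<omega>)) / real_of_int \<bar>n\<bar> - L \<omega>\<bar> < \<epsilon>"
    using uc unfolding uniform_cocycle_def by blast
  have Lp: "\<exists>N::nat. \<forall>w\<in>\<Omega>. \<forall>m\<ge>N. \<bar>ln (opnorm (cocycle_pos E w m)) / real m - L w\<bar> < \<epsilon>"
    if ep: "\<epsilon> > 0" for \<epsilon>
  proof -
    obtain N where N: "\<forall>\<omega>\<in>\<Omega>. \<forall>n::int. \<bar>n\<bar> \<ge> int N \<longrightarrow>
        \<bar>ln (opnorm (cocycle E n \<omega>)) / real_of_int \<bar>n\<bar> - L \<omega>\<bar> < \<epsilon>" using L[OF ep] by blast
    show ?thesis
    proof (intro exI[of _ N] ballI allI impI)
      fix w m assume "w \<in> \<Omega>" "N \<le> m"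
      then show "\<bar>ln (opnorm (cocycle_pos E w m)) / real m - L w\<bar> < \<epsilon>"
        using N[rule_format, of w "int m"] by (simp add: cocycle_def)
    qed
  qed
  have conv: "(\<lambda>n. ln (opnorm (cocycle_pos E w n)) / real n) \<longlonglongrightarrow> L w" if w: "w \<in> \<Omega>" for w
  proof (rule LIMSEQ_I)
    fix r :: real assume "r > 0"
    then obtain N where "\<forall>w\<in>\<Omega>. \<forall>m\<ge>N. \<bar>ln (opnorm (cocycle_pos E w m)) / real m - L w\<bar> < r"
      using Lp by blast
    then show "\<exists>no. \<forall>n\<ge>no. norm (ln (opnorm (cocycle_pos E w n)) / real n - L w) < r"
      using w by auto
  qed
  have inv1: "L (shift w) = L w" if w: "w \<in> \<Omega>" for w
    using L_shift[OF conv[OF w] conv[OF sub_shift[OF sub w]] step_bound] by simp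
  have invk: "L (shiftn k w) = L w" if w: "w \<in> \<Omega>" for w k
  proof (induction k rule: int_induct[where k=0])
    case base then show ?case by simp
  next
    case (step1 i)
    have "shiftn (i + 1) w = shift (shiftn i w)" by (simp add: shift_shiftn shiftn_shiftn add.commute)
    then show ?case using inv1[OF sub_shiftn[OF sub w]] step1 by simp
  next
    case (step2 i)
    have e: "shiftn (i - 1) w = shiftn (-1) (shiftn i w)" by (simp add: shiftn_shiftn)
    have "shift (shiftn (-1) (shiftn i w)) = shiftn i w" by (simp add: shift_shiftn shiftn_shiftn)
    then show ?case using inv1[OF sub_shiftn[OF sub w, of "i - 1"]] step2 e by simp
  qed
  have const: "L w = L w0" if w: "w \<in> \<Omega>" and w0: "w0 \<in> \<Omega>" for w w0
  proof (rule ccontr)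
    assume ne: "L w \<noteq> L w0"
    define \<epsilon> where "\<epsilon> = \<bar>L w - L w0\<bar> / 3"
    have ep: "\<epsilon> > 0" using ne unfolding \<epsilon>_def by simp
    obtain N where N: "\<forall>w\<in>\<Omega>. \<forall>m\<ge>N. \<bar>ln (opnorm (cocycle_pos E w m)) / real m - L w\<bar> < \<epsilon>"
      using Lp[OF ep] by blast
    have NS: "\<bar>ln (opnorm (cocycle_pos E v (Suc N))) / real (Suc N) - L v\<bar> < \<epsilon>" if "v \<in> \<Omega>" for v
      using N[rule_format, OF that, of "Suc N"] by simp
    define h where "h = (\<lambda>v. ln (opnorm (cocycle_pos E v (Suc N))) / real (Suc N))"
    have hc: "continuous_on UNIV h" unfolding h_def
      by (intro continuous_on_divide g_cont continuous_on_const) auto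
    define V where "V = h -` ball (h w) \<epsilon>"
    have oV: "open V" using hc unfolding V_def
      using continuous_on_open_vimage[OF open_UNIV] by (metis Int_UNIV_right open_ball)
    have wV: "w \<in> V" unfolding V_def using ep by simp
    have "w \<in> closure {shiftn k w0 | k. True}"
      using se w w0 unfolding strictly_ergodic_def minimal_shift_def by blast
    then have "{shiftn k w0 | k. True} \<inter> V \<noteq> {}"
      using oV wV unfolding closure_iff_nhds_not_empty by blast
    then obtain k where k: "shiftn k w0 \<in> V" by blast
    have d1: "\<bar>h (shiftn k w0) - h w\<bar> < \<epsilon>" using k unfolding V_def by (simp add: dist_real_def abs_minus_commute)
    have d2: "\<bar>h w - L w\<bar> < \<epsilon>" using NS w unfolding h_def by blast
    have d3: "\<bar>h (shiftn k w0) - L (shiftn k w0)\<bar> < \<epsilon>"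
      using NS sub_shiftn[OF sub w0] unfolding h_def by blast
    have "L (shiftn k w0) = L w0" by (rule invk[OF w0])
    then have "\<bar>L w - L w0\<bar> < 3 * \<epsilon>" using d1 d2 d3 by linarith
    then show False unfolding \<epsilon>_def by simp
  qed
  show ?thesis
  proof (cases "\<Omega> = {}")
    case True
    then have "words \<Omega> = {}" unfolding words_def by blast
    then show ?thesis unfolding word_limit_exists_def by auto
  next
    case False
    then obtain w0 where w0: "w0 \<in> \<Omega>" by blast
    show ?thesis unfolding word_limit_exists_def
    proof (intro exI[of _ "L w0"] allI impI)
      fix \<epsilon> :: real assume ep: "\<epsilon> > 0"
      obtain N where N: "\<forall>w\<in>\<Omega>. \<forall>m\<ge>N. \<bar>ln (opnorm (cocycle_pos E w m)) / real m - L w\<bar> < \<epsilon>"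
        using Lp[OF ep] by blast
      show "\<exists>N::nat. \<forall>x\<in>words \<Omega>. length x \<ge> N \<longrightarrow> \<bar>F \<Omega> E x / real (length x) - L w0\<bar> < \<epsilon>"
      proof (intro exI[of _ N] ballI impI)
        fix x assume x: "x \<in> words \<Omega>" "N \<le> length x"
        obtain v where v: "v \<in> \<Omega>" "F \<Omega> E x = ln (opnorm (cocycle_pos E v (length x)))"
          using F_word[OF sub x(1)] by blast
        show "\<bar>F \<Omega> E x / real (length x) - L w0\<bar> < \<epsilon>"
          using N v x(2) const[OF v(1) w0] by auto
      qed
    qed
  qed
qed

theorem proposition4p4:
  fixes A :: "real set" and \<Omega> :: "(int \<Rightarrow> real) set" and E :: real
  assumes "subshift A \<Omega>" and "strictly_ergodic \<Omega>"
  shows "uniform_cocycle \<Omega> E \<longleftrightarrow> word_limit_exists \<Omega> E"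
  using dir_fwd[OF assms] dir_back[OF assms(1)] by blast

end
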